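(* Let $r\ge 1$ and $q\ge 4$ be integers, and let $G$ be a minimal graph in $H_v(2_r;q-1)$. Then $$F_v(2_r;q-1)\ge F_v(2_r;q)+\alpha(G)-1.$$
   Context: All graphs are finite, simple and undirected. $\mathrm{cl}(G)$ is the clique number and $\alpha(G)$ the independence number of $G$. $G\overset{v}{\to}(2_r)$ means that in every partition of $V(G)$ into $r$ pairwise disjoint parts some part contains an edge (equivalently $\chi(G)\ge r+1$). $H_v(2_r;q)$ is the set of graphs $G$ with $G\overset{v}{\to}(2_r)$ and $\mathrm{cl}(G)<q$; $F_v(2_r;q)=\min\{|V(G)|:G\in H_v(2_r;q)\}$ (which exists iff $q\ge 3$). A graph $G_0$ in a nonempty set $\mathcal M$ of graphs is minimal in $\mathcal M$ if $|V(G_0)|=\min\{|V(G)|:G\in\mathcal M\}$. *)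

theory Defs
  imports Main
begin

definition sgraph :: "'a set \<Rightarrow> 'a set set \<Rightarrow> bool" where
  "sgraph V E \<longleftrightarrow> finite V \<and> (\<forall>e\<in>E. e \<subseteq> V \<and> card e = 2)"

definition is_clique :: "'a set \<Rightarrow> 'a set set \<Rightarrow> 'a set \<Rightarrow> bool" where
  "is_clique V E K \<longleftrightarrow> K \<subseteq> V \<and> (\<forall>x\<in>K. \<forall>y\<in>K. x \<noteq> y \<longrightarrow> {x, y} \<in> E)"

definition is_indep :: "'a set \<Rightarrow> 'a set set \<Rightarrow> 'a set \<Rightarrow> bool" where
  "is_indep V E I \<longleftrightarrow> I \<subseteq> V \<and> (\<forall>x\<in>I. \<forall>y\<in>I. {x, y} \<notin> E)"

definition clique_num :: "'a set \<Rightarrow> 'a set set \<Rightarrow> nat" where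
  "clique_num V E = Max (card ` {K. is_clique V E K})"

definition indep_num :: "'a set \<Rightarrow> 'a set set \<Rightarrow> nat" where
  "indep_num V E = Max (card ` {I. is_indep V E I})"

text \<open>G -v-> (2_r): every partition of V into r (possibly empty) pairwise disjoint
  parts, given by the part index f x < r of each vertex x, has a part containing an edge.\<close>
definition vertex_arrows :: "'a set \<Rightarrow> 'a set set \<Rightarrow> nat \<Rightarrow> bool" where
  "vertex_arrows V E r \<longleftrightarrow>
     (\<forall>f. (\<forall>x\<in>V. f x < r) \<longrightarrow> (\<exists>e\<in>E. \<exists>i<r. \<forall>x\<in>e. f x = i))"

text \<open>H_v(2_r;q), with vertices taken from nat (every finite graph is isomorphic to one
  on a finite subset of nat).\<close>
definition Hv :: "nat \<Rightarrow> nat \<Rightarrow> (nat set \<times> nat set set) set" where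
  "Hv r q = {(V, E). sgraph V E \<and> vertex_arrows V E r \<and> clique_num V E < q}"

definition Fv :: "nat \<Rightarrow> nat \<Rightarrow> nat" where
  "Fv r q = (LEAST n. \<exists>G\<in>Hv r q. card (fst G) = n)"

end

theory Submission
  imports Defs
begin

lemma clique_bound:
  assumes "finite V"
  shows "clique_num V E < q \<longleftrightarrow> (\<forall>K. is_clique V E K \<longrightarrow> card K < q)"
proof -
  have fin: "finite {K. is_clique V E K}"
    by (rule finite_subset[of _ "Pow V"]) (auto simp: is_clique_def assms)
  have ne: "{} \<in> {K. is_clique V E K}" by (simp add: is_clique_def)
  show ?thesis unfolding clique_num_def
    using fin ne by (subst Max_less_iff) auto
qed

lemma indep_max:
  assumes "finite V"
  obtains A where "is_indep V E A" "card A = indep_num V E"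
proof -
  have fin: "finite {K. is_indep V E K}"
    by (rule finite_subset[of _ "Pow V"]) (auto simp: is_indep_def assms)
  have ne: "{} \<in> {K. is_indep V E K}" by (simp add: is_indep_def)
  have "indep_num V E \<in> card ` {K. is_indep V E K}"
    unfolding indep_num_def using fin ne by (intro Max_in) auto
  then show ?thesis using that by auto
qed

lemma image_graph:
  assumes inj: "inj_on h V" and sg: "sgraph V E" and ar: "vertex_arrows V E r"
    and cl: "\<forall>K. is_clique V E K \<longrightarrow> card K < q"
  shows "sgraph (h`V) ((`) h ` E)" "vertex_arrows (h`V) ((`) h ` E) r"
    "\<forall>K. is_clique (h`V) ((`) h ` E) K \<longrightarrow> card K < q"
proof -
  have eV: "\<And>e. e \<in> E \<Longrightarrow> e \<subseteq> V" "\<And>e. e \<in> E \<Longrightarrow> card e = 2" and fV: "finite V"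
    using sg by (auto simp: sgraph_def)
  show "sgraph (h`V) ((`) h ` E)"
    unfolding sgraph_def
  proof (rule conjI[OF _ ballI])
    show "finite (h`V)" using fV by simp
  next
    fix e' assume "e' \<in> (`) h ` E"
    then obtain e where e: "e \<in> E" "e' = h ` e" by auto
    have "inj_on h e" using inj eV(1)[OF e(1)] by (rule inj_on_subset)
    then have "card e' = 2" using e eV(2)[OF e(1)] by (simp add: card_image)
    moreover have "e' \<subseteq> h ` V" using e eV(1)[OF e(1)] by auto
    ultimately show "e' \<subseteq> h ` V \<and> card e' = 2" by simp
  qed
  show "vertex_arrows (h`V) ((`) h ` E) r"
    unfolding vertex_arrows_def
  proof (intro allI impI)
    fix f :: "_ \<Rightarrow> nat" assume f: "\<forall>x\<in>h ` V. f x < r"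
    then have "\<forall>x\<in>V. (f \<circ> h) x < r" by auto
    moreover have "(\<forall>x\<in>V. (f \<circ> h) x < r) \<longrightarrow> (\<exists>e\<in>E. \<exists>i<r. \<forall>x\<in>e. (f \<circ> h) x = i)"
      using ar unfolding vertex_arrows_def by (rule spec)
    ultimately have "\<exists>e\<in>E. \<exists>i<r. \<forall>x\<in>e. (f \<circ> h) x = i" by (rule rev_mp)
    then obtain e i where "e \<in> E" "i < r" "\<forall>x\<in>e. (f \<circ> h) x = i" by blast
    then show "\<exists>e\<in>(`) h ` E. \<exists>i<r. \<forall>x\<in>e. f x = i" by auto
  qed
  show "\<forall>K. is_clique (h`V) ((`) h ` E) K \<longrightarrow> card K < q"
  proof (intro allI impI)
    fix K assume K: "is_clique (h`V) ((`) h ` E) K"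
    define K0 where "K0 = V \<inter> h -` K"
    have KK: "K = h ` K0" using K unfolding K0_def is_clique_def by auto
    have "is_clique V E K0"
      unfolding is_clique_def
    proof (intro conjI ballI impI)
      show "K0 \<subseteq> V" by (auto simp: K0_def)
    next
      fix x y assume xy: "x \<in> K0" "y \<in> K0" "x \<noteq> y"
      then have "h x \<noteq> h y" using inj by (auto simp: K0_def inj_on_def)
      moreover have "h x \<in> K" "h y \<in> K" using xy by (auto simp: K0_def)
      ultimately have "{h x, h y} \<in> (`) h ` E" using K unfolding is_clique_def by blast
      then obtain e where e: "e \<in> E" "h ` e = h ` {x, y}" by auto
      have xyV: "{x,y} \<subseteq> V" using xy by (auto simp: K0_def)
      have "e = {x,y}"
        using inj_on_image_eq_iff[OF inj eV(1)[OF e(1)] xyV] e(2) by (rule iffD1)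
      then show "{x, y} \<in> E" using e by simp
    qed
    then have "card K0 < q" using cl by blast
    moreover have "inj_on h K0" using inj by (rule inj_on_subset) (auto simp: K0_def)
    ultimately show "card K < q" using KK by (simp add: card_image)
  qed
qed

lemma Fv_le:
  fixes V :: "'b set"
  assumes sg: "sgraph V E" and ar: "vertex_arrows V E r"
    and cl: "\<forall>K. is_clique V E K \<longrightarrow> card K < q"
  shows "Fv r q \<le> card V"
proof -
  have fV: "finite V" using sg by (simp add: sgraph_def)
  obtain h where h: "bij_betw h V {0..<card V}" using ex_bij_betw_finite_nat[OF fV] by blast
  then have inj: "inj_on h V" by (simp add: bij_betw_def)
  note ig = image_graph[OF inj sg ar cl]
  have "finite (h`V)" using fV by simp
  then have "(h`V, (`) h ` E) \<in> Hv r q"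
    using ig by (simp add: Hv_def clique_bound)
  moreover have "card (h`V) = card V" using inj by (simp add: card_image)
  ultimately show ?thesis unfolding Fv_def
    by (intro Least_le) force
qed

theorem lemma2p1:
  fixes r q :: nat and V :: "'a set" and E :: "'a set set"
  assumes "r \<ge> 1" and "q \<ge> 4"
    and "sgraph V E" and "vertex_arrows V E r" and "clique_num V E < q - 1"
    and "card V = Fv r (q - 1)"
  shows "Fv r (q - 1) \<ge> Fv r q + indep_num V E - 1"
proof -
  have fV: "finite V" and eV: "\<And>e. e \<in> E \<Longrightarrow> e \<subseteq> V" "\<And>e. e \<in> E \<Longrightarrow> card e = 2"
    using assms(3) by (auto simp: sgraph_def)
  obtain A where A: "is_indep V E A" "card A = indep_num V E" using indep_max[OF fV] by blast
  have AV: "A \<subseteq> V" using A by (simp add: is_indep_def)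
  have clG: "\<forall>K. is_clique V E K \<longrightarrow> card K < q - 1" using assms(5) clique_bound[OF fV] by blast
  define V' where "V' = insert None (Some ` (V - A))"
  define E' where "E' = (`) Some ` {e\<in>E. e \<subseteq> V - A} \<union> {{None, Some v} | v. v \<in> V - A}"
  have sg': "sgraph V' E'"
    unfolding sgraph_def
  proof (rule conjI[OF _ ballI])
    show "finite V'" using fV by (simp add: V'_def)
  next
    fix e' assume "e' \<in> E'"
    then show "e' \<subseteq> V' \<and> card e' = 2"
    proof (cases "e' \<in> (`) Some ` {e\<in>E. e \<subseteq> V - A}")
      case True
      then obtain e where e: "e \<in> E" "e \<subseteq> V - A" "e' = Some ` e" by auto
      then show ?thesis using eV(2)[OF e(1)] by (auto simp: card_image V'_def)
    next
      case False
      then obtain v where "v \<in> V - A" "e' = {None, Some v}" using \<open>e' \<in> E'\<close> by (auto simp: E'_def)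
      then show ?thesis by (auto simp: V'_def)
    qed
  qed
  have ar': "vertex_arrows V' E' r"
    unfolding vertex_arrows_def
  proof (intro allI impI)
    fix f :: "_ \<Rightarrow> nat" assume f: "\<forall>x\<in>V'. f x < r"
    define i where "i = f None"
    have ir: "i < r" using f by (simp add: i_def V'_def)
    define g where "g x = (if x \<in> A then i else f (Some x))" for x
    have "\<forall>x\<in>V. g x < r" using f ir by (auto simp: g_def V'_def)
    moreover have "(\<forall>x\<in>V. g x < r) \<longrightarrow> (\<exists>e\<in>E. \<exists>j<r. \<forall>x\<in>e. g x = j)"
      using assms(4) unfolding vertex_arrows_def by (rule spec)
    ultimately have "\<exists>e\<in>E. \<exists>j<r. \<forall>x\<in>e. g x = j" by (rule rev_mp)
    then obtain e j where e: "e \<in> E" "j < r" "\<forall>x\<in>e. g x = j" by blast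
    show "\<exists>e\<in>E'. \<exists>i<r. \<forall>x\<in>e. f x = i"
    proof (cases "e \<subseteq> V - A")
      case True
      then have "Some ` e \<in> E'" using e by (auto simp: E'_def)
      moreover have "\<forall>x\<in>Some ` e. f x = j"
      proof
        fix x assume "x \<in> Some ` e"
        then obtain y where y: "y \<in> e" "x = Some y" by auto
        then have "y \<notin> A" using True by auto
        then show "f x = j" using e(3) y unfolding g_def by force
      qed
      ultimately show ?thesis using e by blast
    next
      case False
      then obtain a where a: "a \<in> e" "a \<in> A" using eV(1)[OF e(1)] by auto
      have "\<not> e \<subseteq> A"
      proof
        assume "e \<subseteq> A"
        obtain x y where "e = {x, y}" using eV(2)[OF e(1)] by (auto simp: card_2_iff)
        then show False using A(1) e(1) \<open>e \<subseteq> A\<close> unfolding is_indep_def by auto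
      qed
      then obtain b where b: "b \<in> e" "b \<notin> A" by auto
      have bV: "b \<in> V - A" using b eV(1)[OF e(1)] by auto
      have "j = i" using e(3) a by (auto simp: g_def)
      then have "f (Some b) = i" using e(3) b by (auto simp: g_def)
      moreover have "{None, Some b} \<in> E'" using bV by (auto simp: E'_def)
      moreover have "\<forall>x\<in>{None, Some b}. f x = i" using \<open>f (Some b) = i\<close> by (simp add: i_def)
      ultimately show ?thesis using ir by blast
    qed
  qed
  have cl': "\<forall>K. is_clique V' E' K \<longrightarrow> card K < q"
  proof (intro allI impI)
    fix K assume K: "is_clique V' E' K"
    define K0 where "K0 = {x. Some x \<in> K}"
    have K0V: "K0 \<subseteq> V - A" using K by (auto simp: is_clique_def V'_def K0_def)
    have "is_clique V E K0"
      unfolding is_clique_def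
    proof (intro conjI ballI impI)
      show "K0 \<subseteq> V" using K0V by auto
    next
      fix x y assume xy: "x \<in> K0" "y \<in> K0" "x \<noteq> y"
      then have "{Some x, Some y} \<in> E'" using K by (auto simp: is_clique_def K0_def)
      then obtain e where e: "e \<in> E" "Some ` e = {Some x, Some y}"
        by (auto simp: E'_def doubleton_eq_iff)
      have "e = {x, y}"
      proof -
        have "Some ` e = Some ` {x,y}" using e by simp
        then show ?thesis by (metis inj_Some inj_image_eq_iff)
      qed
      then show "{x, y} \<in> E" using e by simp
    qed
    then have "card K0 < q - 1" using clG by blast
    moreover have "finite K0" using K0V fV by (meson finite_Diff finite_subset)
    moreover have "K \<subseteq> insert None (Some ` K0)"
    proof
      fix x assume "x \<in> K" then show "x \<in> insert None (Some ` K0)"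
        by (cases x) (auto simp: K0_def)
    qed
    ultimately have "card K \<le> card (insert None (Some ` K0))" "card (insert None (Some ` K0)) = card K0 + 1"
      by (metis card_mono finite_imageI finite_insert, simp add: card_image)
    then show "card K < q" using \<open>card K0 < q - 1\<close> by linarith
  qed
  have "Fv r q \<le> card V'" by (rule Fv_le[OF sg' ar' cl'])
  moreover have "card V' = card V - card A + 1"
    using fV AV by (simp add: V'_def card_image card_Diff_subset finite_subset)
  moreover have "card A \<le> card V" using fV AV by (simp add: card_mono)
  ultimately show ?thesis using assms(6) A(2) by linarith
qed

end
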